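(* Let $\mathcal S$ be a non-degenerate affine zipper with signature $(0,\dots,0)$ whose matrices have dominated splitting of index-1 with multicone $M$. Then for every $\mathbf i\in\Sigma\setminus B$, $$\alpha(\pi(\mathbf i))\le\limsup_{n\to\infty}\frac{\log\|A_{\mathbf i|_n}\|}{\log\lambda_{\mathbf i|_n}}.$$
   Context: Affine zipper with signature $(0,\dots,0)$: $f_i(x)=A_ix+t_i$ ($i=0,\dots,N-1$) on $\mathbb R^d$, $A_i$ invertible, each $f_i$ a contraction, vertices $z_0,\dots,z_N$ with $f_i(z_0)=z_i$, $f_i(z_N)=z_{i+1}$; $\Gamma=\bigcup_if_i(\Gamma)$. Fix a probability vector $\lambda$ with $\lambda_i>0$; $g_i(x)=\lambda_ix+\gamma_i$, $\gamma_i=\sum_{j<i}\lambda_j$; $v:[0,1]\to\mathbb R^d$ the unique continuous function with $v(x)=f_i(v(g_i^{-1}(x)))$ for $x\in g_i([0,1])$; $\alpha(x)=\liminf_{y\to x}\frac{\log\|v(x)-v(y)\|}{\log|x-y|}$. For a word $\bar\imath=i_1\dots i_k$: $A_{\bar\imath}=A_{i_1}\cdots A_{i_k}$, $\lambda_{\bar\imath}=\lambda_{i_1}\cdots\lambda_{i_k}$, $f_{\bar\imath}=f_{i_1}\circ\cdots\circ f_{i_k}$, $\Gamma_{\bar\imath}=f_{\bar\imath}(\Gamma)$. Operator norms are Euclidean. Dominated splitting of index-1: there is a nonempty open $M\subset\mathbb{PR}^{d-1}$ (projective action; $\langle w\rangle$ the line through $w\neq0$) with finitely many components with pairwise disjoint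 closures, $\bigcup_iA_i\overline M\subset M^o$, and some hyperplane transverse to all elements of $\overline M$. $M(x)=\{y\ne x:\langle y-x\rangle\in M\}$. Non-degenerate: there is a bounded open $U$ with $f_i(U)\cap f_j(U)=\emptyset$ ($i\ne j$), $\Gamma\cap U\ne\emptyset$, and $\langle z_N-z_0\rangle\notin\bigcap_{k\ge0}\bigcap_{|\bar\imath|=k}A_{\bar\imath}^{-1}(M^c)$. Symbolic: $\Sigma=\{0,\dots,N-1\}^{\mathbb N}$, shift $\sigma$, $\mathbf i|_n=i_1\dots i_n$; $\pi(\mathbf i)=\sum_{n\ge1}\lambda_{\mathbf i|_{n-1}}\gamma_{i_n}$, $\Pi(\mathbf i)=\lim_nf_{i_1}\circ\cdots\circ f_{i_n}(0)$, so $v(\pi(\mathbf i))=\Pi(\mathbf i)$. Bad set: for $n,l,m\ge1$, $B_{n,l,m}$ is the set of $\mathbf i\in\Sigma$ with $\big(M(\Pi(\mathbf i))\setminus B_{1/n}(\Pi(\mathbf i))\big)\cap\big(\Gamma\setminus(\Gamma_{\mathbf i|_l}\cup\Gamma_{\mathbf i|_{l-1}(i_l-1)(N-1)^m}\cup\Gamma_{\mathbf i|_{l-1}(i_l+1)0^m})\big)=\emptyset$ (open ball $B_r$; $\mathbf i|_{l-1}(i_l-1)(N-1)^m$ is $i_1\dots i_{l-1}$ followed by $i_l-1$ and $m$ copies of $N-1$, similarly the other; the corresponding $\Gamma$-piece is $\emptyset$ if $i_l=0$, resp. $i_l=N-1$). Then $B=\bigcap_{n,l,m\ge1}\bigcup_{K\ge0}\bigcap_{k\ge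 K}\sigma^{-k}B_{n,l,m}$. *)

theory Defs
  imports "HOL-Analysis.Analysis"
begin

text \<open>Projective space PR^{d-1} realised as the set of orthogonal projection matrices onto lines:
  the line through w is identified with the matrix w w^T / (w . w).\<close>

definition proj :: "real^'n \<Rightarrow> real^'n^'n" where
  "proj w = (\<chi> i j. w$i * w$j / (w \<bullet> w))"

definition projspace :: "(real^'n^'n) set" where
  "projspace = proj ` (UNIV - {0})"

definition cone_at :: "(real^'n^'n) set \<Rightarrow> real^'n \<Rightarrow> (real^'n) set" where
  "cone_at M x = {y. y \<noteq> x \<and> proj (y - x) \<in> M}"

definition dominated_index1 :: "nat \<Rightarrow> (nat \<Rightarrow> real^'n^'n) \<Rightarrow> (real^'n^'n) set \<Rightarrow> bool" where
  "dominated_index1 N A M \<longleftrightarrow>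
     M \<noteq> {} \<and> M \<subseteq> projspace \<and> openin (top_of_set projspace) M
   \<and> finite (components M)
   \<and> (\<forall>C\<in>components M. \<forall>C'\<in>components M. C \<noteq> C' \<longrightarrow>
        (top_of_set projspace) closure_of C \<inter> (top_of_set projspace) closure_of C' = {})
   \<and> (\<forall>i<N. \<forall>w. w \<noteq> 0 \<longrightarrow> proj w \<in> (top_of_set projspace) closure_of M \<longrightarrow>
        proj (A i *v w) \<in> (top_of_set projspace) interior_of M)
   \<and> (\<exists>a::real^'n. a \<noteq> 0 \<and> (\<forall>w. w \<noteq> 0 \<longrightarrow> proj w \<in> (top_of_set projspace) closure_of M \<longrightarrow> a \<bullet> w \<noteq> 0))"

text \<open>Words are lists; the first letter is applied outermost.\<close>
definition mat_word :: "(nat \<Rightarrow> real^'n^'n) \<Rightarrow> nat list \<Rightarrow> real^'n^'n" where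
  "mat_word A ws = foldr (\<lambda>i B. A i ** B) ws (mat 1)"

definition wprod :: "(nat \<Rightarrow> real) \<Rightarrow> nat list \<Rightarrow> real" where
  "wprod lam ws = prod_list (map lam ws)"

definition fun_word :: "(nat \<Rightarrow> 'a \<Rightarrow> 'a) \<Rightarrow> nat list \<Rightarrow> 'a \<Rightarrow> 'a" where
  "fun_word f ws = foldr (\<lambda>i g. f i \<circ> g) ws id"

text \<open>Sequences i = i_1 i_2 ... are represented 0-based: omega 0 = i_1.\<close>
definition prefix :: "(nat \<Rightarrow> nat) \<Rightarrow> nat \<Rightarrow> nat list" where
  "prefix \<omega> n = map \<omega> [0..<n]"

definition shift :: "(nat \<Rightarrow> nat) \<Rightarrow> nat \<Rightarrow> nat \<Rightarrow> nat" where
  "shift \<omega> k = (\<lambda>j. \<omega> (j + k))"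

definition seqspace :: "nat \<Rightarrow> (nat \<Rightarrow> nat) set" where
  "seqspace N = {\<omega>. \<forall>j. \<omega> j < N}"

definition gam :: "(nat \<Rightarrow> real) \<Rightarrow> nat \<Rightarrow> real" where
  "gam lam i = (\<Sum>j<i. lam j)"

definition pi_sym :: "(nat \<Rightarrow> real) \<Rightarrow> (nat \<Rightarrow> nat) \<Rightarrow> real" where
  "pi_sym lam \<omega> = (\<Sum>n. wprod lam (prefix \<omega> n) * gam lam (\<omega> n))"

definition Pi_sym :: "(nat \<Rightarrow> real^'n \<Rightarrow> real^'n) \<Rightarrow> (nat \<Rightarrow> nat) \<Rightarrow> real^'n" where
  "Pi_sym f \<omega> = lim (\<lambda>n. fun_word f (prefix \<omega> n) 0)"

definition piece :: "(nat \<Rightarrow> real^'n \<Rightarrow> real^'n) \<Rightarrow> (real^'n) set \<Rightarrow> nat list \<Rightarrow> (real^'n) set" where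
  "piece f \<Gamma> ws = fun_word f ws ` \<Gamma>"

definition bad_nlm :: "nat \<Rightarrow> (nat \<Rightarrow> real^'n \<Rightarrow> real^'n) \<Rightarrow> (real^'n) set \<Rightarrow> (real^'n^'n) set
    \<Rightarrow> nat \<Rightarrow> nat \<Rightarrow> nat \<Rightarrow> (nat \<Rightarrow> nat) set" where
  "bad_nlm N f \<Gamma> M n l m = {\<omega> \<in> seqspace N.
     (cone_at M (Pi_sym f \<omega>) - ball (Pi_sym f \<omega>) (1 / real n)) \<inter>
     (\<Gamma> - (piece f \<Gamma> (prefix \<omega> l)
           \<union> (if \<omega> (l - 1) = 0 then {}
              else piece f \<Gamma> (prefix \<omega> (l - 1) @ [\<omega> (l - 1) - 1] @ replicate m (N - 1)))
           \<union> (if \<omega> (l - 1) = N - 1 then {}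
              else piece f \<Gamma> (prefix \<omega> (l - 1) @ [\<omega> (l - 1) + 1] @ replicate m 0)))) = {}}"

definition bad_set :: "nat \<Rightarrow> (nat \<Rightarrow> real^'n \<Rightarrow> real^'n) \<Rightarrow> (real^'n) set \<Rightarrow> (real^'n^'n) set
    \<Rightarrow> (nat \<Rightarrow> nat) set" where
  "bad_set N f \<Gamma> M = {\<omega>. \<forall>n\<ge>1. \<forall>l\<ge>1. \<forall>m\<ge>1. \<exists>K. \<forall>k\<ge>K. shift \<omega> k \<in> bad_nlm N f \<Gamma> M n l m}"

definition non_degenerate :: "nat \<Rightarrow> (nat \<Rightarrow> real^'n^'n) \<Rightarrow> (nat \<Rightarrow> real^'n \<Rightarrow> real^'n)
    \<Rightarrow> (nat \<Rightarrow> real^'n) \<Rightarrow> (real^'n) set \<Rightarrow> (real^'n^'n) set \<Rightarrow> bool" where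
  "non_degenerate N A f z \<Gamma> M \<longleftrightarrow>
     (\<exists>U. open U \<and> bounded U \<and> (\<forall>i<N. \<forall>j<N. i \<noteq> j \<longrightarrow> f i ` U \<inter> f j ` U = {}) \<and> \<Gamma> \<inter> U \<noteq> {})
   \<and> z N - z 0 \<noteq> 0
   \<and> (\<exists>ws. set ws \<subseteq> {..<N} \<and> proj (mat_word A ws *v (z N - z 0)) \<in> M)"

text \<open>Local Hoelder exponent; log 0 = -infinity is encoded by the value infinity of the quotient.\<close>
definition holder_exp :: "(real \<Rightarrow> 'a::real_normed_vector) \<Rightarrow> real \<Rightarrow> ereal" where
  "holder_exp v x = Liminf (at x within {0..1})
     (\<lambda>y. if v x = v y then \<infinity> else ereal (ln (norm (v x - v y)) / ln \<bar>x - y\<bar>))"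

end

theory Submission
  imports Defs
begin


lemma fun_word_Nil[simp]: "fun_word f [] = id" by (simp add: fun_word_def)
lemma fun_word_Cons[simp]: "fun_word f (i#w) = f i \<circ> fun_word f w" by (simp add: fun_word_def)
lemma mat_word_Nil[simp]: "mat_word A [] = mat 1" by (simp add: mat_word_def)
lemma mat_word_Cons[simp]: "mat_word A (i#w) = A i ** mat_word A w" by (simp add: mat_word_def)
lemma wprod_Nil[simp]: "wprod lam [] = 1" by (simp add: wprod_def)
lemma wprod_Cons[simp]: "wprod lam (i#w) = lam i * wprod lam w" by (simp add: wprod_def)

lemma mat_word_snoc: "mat_word A (w@[i]) = mat_word A w ** A i"
  by (induction w) (simp_all add: matrix_mul_assoc)

lemma prefix_0[simp]: "prefix \<omega> 0 = []" by (simp add: prefix_def)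
lemma prefix_Suc_Cons: "prefix \<omega> (Suc k) = \<omega> 0 # prefix (shift \<omega> 1) k"
  unfolding prefix_def shift_def
  by (induction k) auto
lemma prefix_Suc_snoc: "prefix \<omega> (Suc k) = prefix \<omega> k @ [\<omega> k]"
  unfolding prefix_def by simp
lemma length_prefix[simp]: "length (prefix \<omega> k) = k" by (simp add: prefix_def)
lemma shift_shift1: "shift (shift \<omega> 1) k = shift \<omega> (Suc k)"
  by (simp add: shift_def)
lemma shift_0[simp]: "shift \<omega> 0 = \<omega>" by (simp add: shift_def)
lemma set_prefix: "\<omega> \<in> seqspace N \<Longrightarrow> set (prefix \<omega> k) \<subseteq> {..<N}"
  by (auto simp: prefix_def seqspace_def)
lemma shift_seqspace: "\<omega> \<in> seqspace N \<Longrightarrow> shift \<omega> k \<in> seqspace N"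
  by (auto simp: shift_def seqspace_def)

lemma fun_word_affine:
  "fun_word (\<lambda>i x. A i *v x + t i) w x - fun_word (\<lambda>i x. A i *v x + t i) w y
     = mat_word A w *v (x - y)"
proof (induction w)
  case Nil then show ?case by (simp add: matrix_vector_mul_lid)
next
  case (Cons i w)
  have "A i *v fun_word (\<lambda>i x. A i *v x + t i) w x + t i -
        (A i *v fun_word (\<lambda>i x. A i *v x + t i) w y + t i)
      = A i *v (fun_word (\<lambda>i x. A i *v x + t i) w x - fun_word (\<lambda>i x. A i *v x + t i) w y)"
    by (simp add: matrix_vector_mult_diff_distrib)
  then show ?case using Cons by (simp add: matrix_vector_mul_assoc)
qed

lemma mat_word_norm:
  assumes "\<And>i u. i < N \<Longrightarrow> norm (A i *v u) \<le> c * norm u" "0 \<le> c" "set w \<subseteq> {..<N}"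
  shows "norm (mat_word A w *v u) \<le> c ^ length w * norm u"
  using assms(3)
proof (induction w arbitrary: u)
  case Nil then show ?case by (simp add: matrix_vector_mul_lid)
next
  case (Cons i w)
  have "norm (mat_word A (i#w) *v u) = norm (A i *v (mat_word A w *v u))"
    by (simp add: matrix_vector_mul_assoc)
  also have "\<dots> \<le> c * norm (mat_word A w *v u)" using assms(1) Cons.prems by auto
  also have "\<dots> \<le> c * (c ^ length w * norm u)"
    using Cons by (intro mult_left_mono) (auto simp: assms(2))
  finally show ?case by simp
qed

lemma mat_word_inv:
  assumes "\<And>i u. i < N \<Longrightarrow> u \<in> C \<Longrightarrow> A i *v u \<in> C" "set w \<subseteq> {..<N}" "u \<in> C"
  shows "mat_word A w *v u \<in> C"
  using assms(2,3)
  by (induction w arbitrary: u) (auto simp: matrix_vector_mul_lid simp flip: matrix_vector_mul_assoc intro: assms(1))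

lemma wprod_bound:
  assumes "\<And>i. i < N \<Longrightarrow> 0 \<le> lam i \<and> lam i \<le> \<rho>" "set w \<subseteq> {..<N}"
  shows "0 \<le> wprod lam w \<and> wprod lam w \<le> \<rho> ^ length w"
  using assms(2)
proof (induction w)
  case Nil then show ?case by simp
next
  case (Cons i w)
  then have "0 \<le> lam i" "lam i \<le> \<rho>" using assms(1) by auto
  with Cons show ?case by (auto intro: mult_mono)
qed


lemma gam_Suc: "gam lam (Suc i) = gam lam i + lam i" by (simp add: gam_def)

lemma gam_bounds:
  assumes pos: "\<forall>i<N. lam i > 0" and s: "(\<Sum>i<N. lam i) = 1" and i: "i < N"
  shows "0 \<le> gam lam i \<and> gam lam i + lam i \<le> 1"
proof -
  have "0 \<le> gam lam i" unfolding gam_def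
  proof (intro sum_nonneg)
    fix j assume "j \<in> {..<i}" then show "0 \<le> lam j" using pos i
      by (meson lessThan_iff less_imp_le less_trans)
  qed
  moreover have "gam lam i + lam i = (\<Sum>j<Suc i. lam j)" by (simp add: gam_def)
  moreover have "(\<Sum>j<Suc i. lam j) \<le> (\<Sum>j<N. lam j)"
    using pos i by (intro sum_mono2) auto
  ultimately show ?thesis using s by simp
qed

definition gmap :: "(nat \<Rightarrow> real) \<Rightarrow> nat \<Rightarrow> real \<Rightarrow> real" where
  "gmap lam i s = lam i * s + gam lam i"

lemma gmap_unit:
  assumes pos: "\<forall>i<N. lam i > 0" and s: "(\<Sum>i<N. lam i) = 1" and w: "set w \<subseteq> {..<N}"
    and x: "x \<in> {0..1}"
  shows "fun_word (gmap lam) w x \<in> {0..1}"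
  using w
proof (induction w)
  case Nil then show ?case using x by simp
next
  case (Cons i w)
  then have i: "i < N" and y: "fun_word (gmap lam) w x \<in> {0..1}" by auto
  obtain yy where yd: "yy = fun_word (gmap lam) w x" by simp
  let ?y = "fun_word (gmap lam) w x"
  have e: "fun_word (gmap lam) (i#w) x = gmap lam i yy" using yd by simp
  from gam_bounds[OF pos s i] have g: "0 \<le> gam lam i" "gam lam i + lam i \<le> 1" by auto
  have l: "0 < lam i" using pos i by auto
  have "lam i * ?y \<le> lam i" using y l by (intro mult_left_le) auto
  moreover have "0 \<le> lam i * ?y" using y l by auto
  ultimately show ?case using g unfolding e gmap_def by simp
qed

lemma gmap_dist:
  shows "fun_word (gmap lam) w x - fun_word (gmap lam) w y = wprod lam w * (x - y)"
proof (induction w)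
  case Nil then show ?case by simp
next
  case (Cons i w)
  have "\<And>a b. gmap lam i a - gmap lam i b = lam i * (a - b)" by (simp add: gmap_def algebra_simps)
  then show ?case using Cons by simp
qed

lemma v_gmap:
  assumes pos: "\<forall>i<N. lam i > 0" and s: "(\<Sum>i<N. lam i) = 1"
    and veq: "\<forall>i<N. \<forall>x\<in>(\<lambda>y. lam i * y + gam lam i) ` {0..1}.
                v x = f i (v ((x - gam lam i) / lam i))"
    and w: "set w \<subseteq> {..<N}" and x: "x \<in> {0..1}"
  shows "v (fun_word (gmap lam) w x) = fun_word f w (v x)"
  using w
proof (induction w)
  case Nil then show ?case by simp
next
  case (Cons i w)
  then have i: "i < N" and IH: "v (fun_word (gmap lam) w x) = fun_word f w (v x)" by auto
  let ?y = "fun_word (gmap lam) w x"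
  have y: "?y \<in> {0..1}" using gmap_unit[OF pos s _ x] Cons.prems by auto
  have eq1: "v (lam i * ?y + gam lam i) = f i (v ((lam i * ?y + gam lam i - gam lam i) / lam i))"
    using veq i y by blast
  have "lam i \<noteq> 0" using pos i by auto
  then have "(lam i * ?y + gam lam i - gam lam i) / lam i = ?y" by simp
  with eq1 have "v (lam i * ?y + gam lam i) = f i (v ?y)" by simp
  moreover have "fun_word (gmap lam) (i#w) x = lam i * ?y + gam lam i" by (simp add: gmap_def)
  ultimately show ?case using IH by simp
qed

lemma wprod_nonneg: "\<forall>i<N. 0 \<le> lam i \<Longrightarrow> set w \<subseteq> {..<N} \<Longrightarrow> 0 \<le> wprod lam w"
  by (induction w) auto

definition pterm :: "(nat \<Rightarrow> real) \<Rightarrow> (nat \<Rightarrow> nat) \<Rightarrow> nat \<Rightarrow> real" where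
  "pterm lam \<omega> n = wprod lam (prefix \<omega> n) * gam lam (\<omega> n)"

lemma pterm_bound:
  assumes pos: "\<forall>i<N. lam i > 0" and s: "(\<Sum>i<N. lam i) = 1"
    and rho: "\<And>i. i < N \<Longrightarrow> lam i \<le> \<rho>" and om: "\<omega> \<in> seqspace N"
  shows "0 \<le> pterm lam \<omega> n \<and> pterm lam \<omega> n \<le> \<rho> ^ n"
proof -
  have wb: "0 \<le> wprod lam (prefix \<omega> n) \<and> wprod lam (prefix \<omega> n) \<le> \<rho> ^ n"
    using wprod_bound[of N lam \<rho> "prefix \<omega> n"] pos rho set_prefix[OF om]
    by (simp add: less_imp_le)
  have "\<omega> n < N" using om by (simp add: seqspace_def)
  from gam_bounds[OF pos s this] pos this have g: "0 \<le> gam lam (\<omega> n)" "gam lam (\<omega> n) \<le> 1"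
    by auto
  have "pterm lam \<omega> n \<le> wprod lam (prefix \<omega> n)" unfolding pterm_def
    using wb g by (intro mult_left_le) auto
  then show ?thesis unfolding pterm_def using wb g by auto
qed

lemma pterm_summable:
  assumes pos: "\<forall>i<N. lam i > 0" and s: "(\<Sum>i<N. lam i) = 1"
    and rho: "\<And>i. i < N \<Longrightarrow> lam i \<le> \<rho>" "\<rho> < 1" and om: "\<omega> \<in> seqspace N"
  shows "summable (pterm lam \<omega>)"
proof (rule summable_comparison_test[where g="\<lambda>n. \<rho> ^ n"])
  have "0 \<le> \<rho>"
  proof -
    have "N \<noteq> 0" using s by (metis lessThan_0 sum.empty zero_neq_one)
    then have "0 < N" by simp
    then show ?thesis using rho(1)[of 0] pos by force
  qed
  then show "summable (\<lambda>n. \<rho> ^ n)" using rho(2) by (simp add: summable_geometric)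
  show "\<exists>N. \<forall>n\<ge>N. norm (pterm lam \<omega> n) \<le> \<rho> ^ n"
    using pterm_bound[OF pos s rho(1) om] by auto
qed

lemma pi_sym_eq: "pi_sym lam \<omega> = suminf (pterm lam \<omega>)"
  by (simp add: pi_sym_def pterm_def[abs_def])

lemma pterm_partial:
  assumes pos: "\<forall>i<N. lam i > 0" and s: "(\<Sum>i<N. lam i) = 1" and om: "\<omega> \<in> seqspace N"
  shows "(\<Sum>j<n. pterm lam \<omega> j) \<le> 1 - wprod lam (prefix \<omega> n)"
proof (induction n)
  case 0 then show ?case by simp
next
  case (Suc n)
  have "\<omega> n < N" using om by (simp add: seqspace_def)
  from gam_bounds[OF pos s this] have g: "gam lam (\<omega> n) \<le> 1 - lam (\<omega> n)" by simp
  have w0: "0 \<le> wprod lam (prefix \<omega> n)"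
    using wprod_nonneg[of N lam "prefix \<omega> n"] pos set_prefix[OF om] by (simp add: less_imp_le)
  have "pterm lam \<omega> n \<le> wprod lam (prefix \<omega> n) * (1 - lam (\<omega> n))"
    unfolding pterm_def using w0 g by (intro mult_left_mono) auto
  moreover have "wprod lam (prefix \<omega> (Suc n)) = wprod lam (prefix \<omega> n) * lam (\<omega> n)"
    by (simp add: prefix_Suc_snoc wprod_def)
  ultimately show ?case using Suc by (simp add: algebra_simps)
qed


locale lamset =
  fixes N :: nat and lam :: "nat \<Rightarrow> real" and \<rho> :: real
  assumes pos: "\<forall>i<N. lam i > 0" and s: "(\<Sum>i<N. lam i) = 1"
    and rho: "\<And>i. i < N \<Longrightarrow> lam i \<le> \<rho>" and rho1: "\<rho> < 1"
begin

lemma summ: "\<omega> \<in> seqspace N \<Longrightarrow> summable (pterm lam \<omega>)"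
  using pterm_summable[OF pos s rho rho1] by blast

lemma pi_unit: assumes om: "\<omega> \<in> seqspace N" shows "pi_sym lam \<omega> \<in> {0..1}"
proof -
  have "0 \<le> pi_sym lam \<omega>" unfolding pi_sym_eq
    using summ[OF om] pterm_bound[OF pos s rho om] by (intro suminf_nonneg) auto
  moreover have "pi_sym lam \<omega> \<le> 1" unfolding pi_sym_eq
  proof (rule suminf_le_const[OF summ[OF om]])
    fix n
    have "0 \<le> wprod lam (prefix \<omega> n)"
      using wprod_nonneg[of N lam "prefix \<omega> n"] pos set_prefix[OF om] by (simp add: less_imp_le)
    then show "sum (pterm lam \<omega>) {..<n} \<le> 1" using pterm_partial[OF pos s om, of n] by simp
  qed
  ultimately show ?thesis by simp
qed

lemma pi_step: assumes om: "\<omega> \<in> seqspace N"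
  shows "pi_sym lam \<omega> = gmap lam (\<omega> 0) (pi_sym lam (shift \<omega> 1))"
proof -
  have om1: "shift \<omega> 1 \<in> seqspace N" using shift_seqspace[OF om] .
  have t: "pterm lam \<omega> (Suc n) = lam (\<omega> 0) * pterm lam (shift \<omega> 1) n" for n
    by (simp add: pterm_def prefix_Suc_Cons) (simp add: shift_def)
  have "suminf (pterm lam \<omega>) = pterm lam \<omega> 0 + (\<Sum>n. pterm lam \<omega> (Suc n))"
    using suminf_split_head[OF summ[OF om]] by simp
  also have "(\<Sum>n. pterm lam \<omega> (Suc n)) = lam (\<omega> 0) * suminf (pterm lam (shift \<omega> 1))"
    unfolding t by (rule suminf_mult[OF summ[OF om1]])
  also have "pterm lam \<omega> 0 = gam lam (\<omega> 0)" by (simp add: pterm_def)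
  finally show ?thesis by (simp add: pi_sym_eq gmap_def)
qed

lemma pi_iter: assumes om: "\<omega> \<in> seqspace N"
  shows "pi_sym lam \<omega> = fun_word (gmap lam) (prefix \<omega> k) (pi_sym lam (shift \<omega> k))"
  using om
proof (induction k arbitrary: \<omega>)
  case 0 then show ?case by simp
next
  case (Suc k)
  have om1: "shift \<omega> 1 \<in> seqspace N" using shift_seqspace[OF Suc.prems] .
  have "pi_sym lam \<omega> = gmap lam (\<omega> 0) (pi_sym lam (shift \<omega> 1))" using pi_step[OF Suc.prems] .
  also have "pi_sym lam (shift \<omega> 1) = fun_word (gmap lam) (prefix (shift \<omega> 1) k) (pi_sym lam (shift \<omega> (Suc k)))"
    using Suc.IH[OF om1] by (metis shift_shift1)
  finally show ?case by (simp add: prefix_Suc_Cons)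
qed

end


locale zset = lamset N lam \<rho> for N lam \<rho> +
  fixes A :: "nat \<Rightarrow> real^'n^'n" and t :: "nat \<Rightarrow> real^'n" and v :: "real \<Rightarrow> real^'n"
    and cc :: real
  assumes cc: "0 \<le> cc" "cc < 1" "\<And>i u. i < N \<Longrightarrow> norm (A i *v u) \<le> cc * norm u"
    and vcont: "continuous_on {0..1} v"
    and veq: "\<forall>i<N. \<forall>x\<in>(\<lambda>y. lam i * y + gam lam i) ` {0..1}.
                v x = (\<lambda>i x. A i *v x + t i) i (v ((x - gam lam i) / lam i))"
begin

abbreviation "ff \<equiv> (\<lambda>i x. A i *v x + t i)"

lemma vg: "set w \<subseteq> {..<N} \<Longrightarrow> x \<in> {0..1} \<Longrightarrow> v (fun_word (gmap lam) w x) = fun_word ff w (v x)"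
  by (rule v_gmap[OF pos s veq])

lemma vbound: obtains B where "B \<ge> 0" "\<And>s. s \<in> {0..1} \<Longrightarrow> norm (v s) \<le> B"
proof -
  have "compact (v ` {0..1})" by (rule compact_continuous_image[OF vcont]) simp
  then obtain B where "B > 0" "\<And>y. y \<in> v ` {0..1} \<Longrightarrow> norm y \<le> B"
    using compact_imp_bounded bounded_pos by metis
  then show ?thesis using that[of B] by auto
qed

lemma v_Pi: assumes om: "\<omega> \<in> seqspace N" shows "v (pi_sym lam \<omega>) = Pi_sym ff \<omega>"
proof -
  obtain B where B: "B \<ge> 0" "\<And>s. s \<in> {0..1} \<Longrightarrow> norm (v s) \<le> B" using vbound by blast
  have e: "v (pi_sym lam \<omega>) = fun_word ff (prefix \<omega> n) (v (pi_sym lam (shift \<omega> n)))" for n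
  proof -
    have "v (pi_sym lam \<omega>) = v (fun_word (gmap lam) (prefix \<omega> n) (pi_sym lam (shift \<omega> n)))"
      using pi_iter[OF om, of n] by (rule arg_cong)
    also have "\<dots> = fun_word ff (prefix \<omega> n) (v (pi_sym lam (shift \<omega> n)))"
      by (rule vg[OF set_prefix[OF om] pi_unit[OF shift_seqspace[OF om]]])
    finally show ?thesis .
  qed
  have bnd: "norm (fun_word ff (prefix \<omega> n) 0 - v (pi_sym lam \<omega>)) \<le> cc ^ n * B" for n
  proof -
    have "fun_word ff (prefix \<omega> n) 0 - v (pi_sym lam \<omega>)
        = fun_word ff (prefix \<omega> n) 0 - fun_word ff (prefix \<omega> n) (v (pi_sym lam (shift \<omega> n)))"
      by (subst e[of n]) (rule refl)
    also have "\<dots> = mat_word A (prefix \<omega> n) *v (0 - v (pi_sym lam (shift \<omega> n)))"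
      by (rule fun_word_affine)
    finally have eq: "norm (fun_word ff (prefix \<omega> n) 0 - v (pi_sym lam \<omega>))
       = norm (mat_word A (prefix \<omega> n) *v (0 - v (pi_sym lam (shift \<omega> n))))" by (rule arg_cong)
    have "norm (mat_word A (prefix \<omega> n) *v (0 - v (pi_sym lam (shift \<omega> n))))
        \<le> cc ^ length (prefix \<omega> n) * norm (0 - v (pi_sym lam (shift \<omega> n)))"
      by (rule mat_word_norm[OF cc(3) cc(1) set_prefix[OF om]])
    also have "\<dots> = cc ^ n * norm (v (pi_sym lam (shift \<omega> n)))" by simp
    also have "\<dots> \<le> cc ^ n * B"
      using B(2)[OF pi_unit[OF shift_seqspace[OF om]]] cc(1) by (intro mult_left_mono) auto
    finally show ?thesis using eq by simp
  qed
  have "(\<lambda>n. cc ^ n) \<longlonglongrightarrow> 0"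
    by (rule LIMSEQ_power_zero) (use cc in auto)
  then have "(\<lambda>n. cc ^ n * B) \<longlonglongrightarrow> 0"
    by (rule tendsto_mult_left_zero)
  then have "(\<lambda>n. fun_word ff (prefix \<omega> n) 0 - v (pi_sym lam \<omega>)) \<longlonglongrightarrow> 0"
    by (rule Lim_null_comparison[rotated]) (use bnd in auto)
  then have "(\<lambda>n. fun_word ff (prefix \<omega> n) 0) \<longlonglongrightarrow> v (pi_sym lam \<omega>)"
    by (simp only: LIM_zero_iff)
  then show ?thesis unfolding Pi_sym_def by (rule limI[symmetric])
qed

lemma Gamma_sub: assumes G: "compact \<Gamma>" "\<Gamma> = (\<Union>i<N. ff i ` \<Gamma>)"
  shows "\<Gamma> \<subseteq> v ` {0..1}"
proof (cases "\<Gamma> = {}")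
  case True then show ?thesis by simp
next
  case False
  let ?V = "v ` {0..1}"
  have cV: "compact ?V" by (rule compact_continuous_image[OF vcont]) simp
  have nV: "?V \<noteq> {}" by simp
  have fV: "ff i y \<in> ?V" if "i < N" "y \<in> ?V" for i y
  proof -
    from that obtain r where r: "r \<in> {0..1}" "y = v r" by auto
    have 1: "v (fun_word (gmap lam) [i] r) = fun_word ff [i] (v r)" using vg[of "[i]" r] that r by simp
    have 2: "fun_word (gmap lam) [i] r \<in> {0..1}"
      using gmap_unit[OF pos s, of "[i]" r] that r by simp
    have "ff i y = v (fun_word (gmap lam) [i] r)" using 1 r by simp
    then show ?thesis using 2 by simp
  qed
  have step: "infdist (ff i y) ?V \<le> cc * infdist y ?V" if "i < N" for i y
  proof -
    obtain z where z: "z \<in> ?V" "infdist y ?V = dist y z"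
      using infdist_attains_inf[OF compact_imp_closed[OF cV] nV] by blast
    have "infdist (ff i y) ?V \<le> dist (ff i y) (ff i z)" using fV[OF that z(1)] by (rule infdist_le)
    also have "\<dots> = norm (A i *v (y - z))" by (simp add: dist_norm matrix_vector_mult_diff_distrib)
    also have "\<dots> \<le> cc * dist y z" using cc(3)[OF that] by (simp add: dist_norm)
    finally show ?thesis using z by simp
  qed
  have "continuous_on \<Gamma> (\<lambda>y. infdist y ?V)" by (intro continuous_on_infdist continuous_on_id)
  then obtain y0 where y0: "y0 \<in> \<Gamma>" "\<And>y. y \<in> \<Gamma> \<Longrightarrow> infdist y ?V \<le> infdist y0 ?V"
    using continuous_attains_sup[OF G(1) False] by blast
  from y0(1) G(2) obtain i y1 where iy: "i < N" "y1 \<in> \<Gamma>" "y0 = ff i y1" by blast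
  have "cc * infdist y1 ?V \<le> cc * infdist y0 ?V"
    using y0(2)[OF iy(2)] cc(1) by (rule mult_left_mono)
  then have h: "infdist y0 ?V \<le> cc * infdist y0 ?V"
    using step[OF iy(1), of y1] iy(3) by simp
  then have "(1 - cc) * infdist y0 ?V \<le> 0" by (simp add: left_diff_distrib)
  then have "infdist y0 ?V \<le> 0" using cc(2) by (simp add: mult_le_0_iff)
  then have z: "infdist y0 ?V = 0" using infdist_nonneg[of y0 ?V] by linarith
  show ?thesis
  proof
    fix y assume "y \<in> \<Gamma>"
    then have "infdist y ?V = 0" using y0(2) z infdist_nonneg[of y ?V] by fastforce
    then show "y \<in> ?V" using in_closed_iff_infdist_zero[OF compact_imp_closed[OF cV] nV] by blast
  qed
qed

end


lemma proj_scale: "c \<noteq> 0 \<Longrightarrow> proj (c *\<^sub>R u) = proj u"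
  unfolding proj_def by (simp add: vec_eq_iff power2_eq_square)

lemma proj_cont: "continuous_on (UNIV - {0}) (proj :: real^'n \<Rightarrow> real^'n^'n)"
  unfolding proj_def
  by (intro continuous_on_vec_lambda continuous_on_divide continuous_on_mult
        continuous_on_component continuous_on_inner continuous_on_id) auto

lemma inv_nonzero: "invertible (B::real^'n^'n) \<Longrightarrow> x \<noteq> 0 \<Longrightarrow> B *v x \<noteq> 0"
proof
  assume B: "invertible B" and x: "x \<noteq> 0" and z: "B *v x = 0"
  from B obtain C where C: "C ** B = mat 1" by (auto simp: invertible_left_inverse)
  have "x = (C ** B) *v x" by (simp add: C matrix_vector_mul_lid)
  also have "\<dots> = C *v (B *v x)" by (simp add: matrix_vector_mul_assoc)
  also have "\<dots> = 0" by (simp add: z)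
  finally show False using x by simp
qed

locale domset =
  fixes N :: nat and A :: "nat \<Rightarrow> real^'n^'n" and M :: "(real^'n^'n) set" and cc :: real
  assumes dom: "dominated_index1 N A M" and cc0: "0 \<le> cc"
    and ccb: "\<And>i u. i < N \<Longrightarrow> norm (A i *v u) \<le> cc * norm u"
    and inv: "\<And>i. i < N \<Longrightarrow> invertible (A i)"
begin

abbreviation "X \<equiv> top_of_set (projspace :: (real^'n^'n) set)"
definition "Cl = {u. u \<noteq> 0 \<and> proj u \<in> X closure_of M}"
definition "Op = {u. u \<noteq> 0 \<and> proj u \<in> M}"
definition "IC = {u. u \<noteq> 0 \<and> proj u \<in> X interior_of M}"

lemma dp1: "M \<noteq> {}" using dom unfolding dominated_index1_def by (elim conjE) assumption
lemma dp2: "M \<subseteq> projspace" using dom unfolding dominated_index1_def by (elim conjE) assumption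
lemma dp3: "openin X M" using dom unfolding dominated_index1_def by (elim conjE) assumption
lemma dp4: "\<forall>i<N. \<forall>w. w \<noteq> 0 \<longrightarrow> proj w \<in> X closure_of M \<longrightarrow> proj (A i *v w) \<in> X interior_of M"
  using dom unfolding dominated_index1_def by (elim conjE) assumption
lemma dp5: "\<exists>a::real^'n. a \<noteq> 0 \<and> (\<forall>w. w \<noteq> 0 \<longrightarrow> proj w \<in> X closure_of M \<longrightarrow> a \<bullet> w \<noteq> 0)"
  using dom unfolding dominated_index1_def by (elim conjE) assumption
lemmas dom_parts0 = dp1 dp2 dp3 dp4 dp5

lemma dom_parts:
  "M \<noteq> {}" "M \<subseteq> projspace" "openin X M"
  "\<And>i w. i < N \<Longrightarrow> w \<noteq> 0 \<Longrightarrow> proj w \<in> X closure_of M \<Longrightarrow> proj (A i *v w) \<in> X interior_of M"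
  "\<exists>a::real^'n. a \<noteq> 0 \<and> (\<forall>w. w \<noteq> 0 \<longrightarrow> proj w \<in> X closure_of M \<longrightarrow> a \<bullet> w \<noteq> 0)"
  using dom_parts0 by simp_all

lemma projspace_img: "proj ` (UNIV - {0}) = projspace" by (simp add: projspace_def)

lemma Op_open: "open Op"
proof -
  have "openin (top_of_set (proj ` (UNIV - {0}))) M" using dom_parts(3) unfolding projspace_img .
  then have "openin (top_of_set (UNIV - {0})) ((UNIV - {0}) \<inter> proj -` M)"
    using continuous_on_open[THEN iffD1, OF proj_cont] by blast
  moreover have "(UNIV - {0}) \<inter> proj -` M = Op" by (auto simp: Op_def)
  ultimately show ?thesis using openin_open_trans[OF _ open_delete[OF open_UNIV]] by simp
qed

lemma IC_open: "open IC"
proof -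
  have "openin (top_of_set (proj ` (UNIV - {0}))) (X interior_of M)"
    unfolding projspace_img by (rule openin_interior_of)
  then have "openin (top_of_set (UNIV - {0})) ((UNIV - {0}) \<inter> proj -` (X interior_of M))"
    using continuous_on_open[THEN iffD1, OF proj_cont] by blast
  moreover have "(UNIV - {0}) \<inter> proj -` (X interior_of M) = IC" by (auto simp: IC_def)
  ultimately show ?thesis using openin_open_trans[OF _ open_delete[OF open_UNIV]] by simp
qed

lemma K_compact: "compact (sphere 0 1 \<inter> Cl)"
proof -
  have c1: "closedin (top_of_set (proj ` (UNIV - {0}))) (X closure_of M)"
    unfolding projspace_img by (rule closedin_closure_of)
  have c2: "closedin (top_of_set (UNIV - {0})) ((UNIV - {0}) \<inter> proj -` (X closure_of M))"
    by (rule continuous_on_imp_closedin[OF proj_cont c1])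
  have e: "(UNIV - {0}) \<inter> proj -` (X closure_of M) = Cl" unfolding Cl_def by blast
  have "closedin (top_of_set (UNIV - {0})) Cl" using c2 unfolding e .
  then obtain F where F: "closed F" "Cl = (UNIV - {0}) \<inter> F"
    unfolding closedin_closed by blast
  have "sphere 0 1 \<inter> Cl = sphere 0 1 \<inter> F"
  proof (intro equalityI subsetI)
    fix x assume "x \<in> sphere 0 1 \<inter> Cl" then show "x \<in> sphere 0 1 \<inter> F" using F(2) by blast
  next
    fix x assume x: "x \<in> sphere 0 1 \<inter> F"
    then have "x \<noteq> 0" by auto
    then show "x \<in> sphere 0 1 \<inter> Cl" using F(2) x by blast
  qed
  moreover have "compact (sphere 0 1 \<inter> F)" using F(1) by (intro compact_Int_closed) auto
  ultimately show ?thesis by simp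
qed

lemma Op_Cl: "Op \<subseteq> Cl"
proof -
  have "M \<subseteq> X closure_of M" using dom_parts(2) by (intro closure_of_subset) simp
  then show ?thesis by (auto simp: Op_def Cl_def)
qed

lemma IC_Cl: "IC \<subseteq> Cl"
  using interior_of_subset_closure_of[of X M] unfolding IC_def Cl_def by blast

lemma A_IC: "i < N \<Longrightarrow> u \<in> Cl \<Longrightarrow> A i *v u \<in> IC"
  using dom_parts(4)[of i u] inv_nonzero[OF inv] by (auto simp: Cl_def IC_def)

lemma A_Cl: "i < N \<Longrightarrow> u \<in> Cl \<Longrightarrow> A i *v u \<in> Cl"
  using A_IC IC_Cl by blast

lemma Cl_scale: "u \<in> Cl \<Longrightarrow> c \<noteq> 0 \<Longrightarrow> c *\<^sub>R u \<in> Cl"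
  by (auto simp: Cl_def proj_scale)

lemma Cl_nonzero: "u \<in> Cl \<Longrightarrow> u \<noteq> 0" by (simp add: Cl_def)

lemma Op_ne: "Op \<noteq> {}"
proof -
  obtain m where "m \<in> M" using dom_parts(1) by blast
  then obtain w where "w \<noteq> 0" "proj w = m" using dom_parts(2) by (auto simp: projspace_def)
  then show ?thesis using \<open>m \<in> M\<close> by (auto simp: Op_def)
qed

end


lemma aux1: "(d::real) > 0 \<Longrightarrow> r / (2*d) * d = r/2" by simp

context domset begin

definition "aa = (SOME a::real^'n. a \<noteq> 0 \<and> (\<forall>w. w \<noteq> 0 \<longrightarrow> proj w \<in> X closure_of M \<longrightarrow> a \<bullet> w \<noteq> 0))"

lemma aa: "aa \<noteq> 0" "\<And>u. u \<in> Cl \<Longrightarrow> aa \<bullet> u \<noteq> 0"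
proof -
  have "aa \<noteq> 0 \<and> (\<forall>w. w \<noteq> 0 \<longrightarrow> proj w \<in> X closure_of M \<longrightarrow> aa \<bullet> w \<noteq> 0)"
    unfolding aa_def by (rule someI_ex[OF dom_parts(5)])
  then show "aa \<noteq> 0" "\<And>u. u \<in> Cl \<Longrightarrow> aa \<bullet> u \<noteq> 0" by (auto simp: Cl_def)
qed

lemma unitK: "u \<in> Cl \<Longrightarrow> (1 / norm u) *\<^sub>R u \<in> sphere 0 1 \<inter> Cl"
  using Cl_scale[of u "1 / norm u"] Cl_nonzero[of u] by auto

lemma delta: obtains \<delta> where "\<delta> > 0" "\<And>u. u \<in> Cl \<Longrightarrow> \<delta> * norm u \<le> \<bar>aa \<bullet> u\<bar>"
proof (cases "sphere 0 1 \<inter> Cl = {}")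
  case True
  then have "Cl = {}" using unitK by blast
  then show ?thesis using that[of 1] by auto
next
  case False
  have "continuous_on (sphere 0 1 \<inter> Cl) (\<lambda>u. \<bar>aa \<bullet> u\<bar>)" by (intro continuous_intros)
  then obtain u0 where u0: "u0 \<in> sphere 0 1 \<inter> Cl" "\<And>y. y \<in> sphere 0 1 \<inter> Cl \<Longrightarrow> \<bar>aa \<bullet> u0\<bar> \<le> \<bar>aa \<bullet> y\<bar>"
    using continuous_attains_inf[OF K_compact False] by blast
  have pos: "\<bar>aa \<bullet> u0\<bar> > 0" using aa(2)[of u0] u0(1) by auto
  show ?thesis
  proof (rule that[OF pos])
    fix u assume u: "u \<in> Cl"
    have nu: "norm u > 0" using Cl_nonzero[OF u] by simp
    have "\<bar>aa \<bullet> u0\<bar> \<le> \<bar>aa \<bullet> ((1 / norm u) *\<^sub>R u)\<bar>" using u0(2)[OF unitK[OF u]] .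
    also have "\<dots> = \<bar>aa \<bullet> u\<bar> / norm u" using nu by (simp add: abs_mult)
    finally show "\<bar>aa \<bullet> u0\<bar> * norm u \<le> \<bar>aa \<bullet> u\<bar>" using nu by (simp add: pos_le_divide_eq)
  qed
qed

definition "DD = {\<psi>::real^'n. \<forall>u\<in>Cl. \<psi> \<bullet> u \<noteq> 0}"
definition "EE = closure (DD \<inter> sphere 0 1)"

lemma EE_sphere: "EE \<subseteq> sphere 0 1"
  unfolding EE_def by (rule closure_minimal) auto

lemma EE_compact: "compact EE"
  unfolding EE_def by (simp add: compact_closure bounded_Int)

lemma EE_pos:
  assumes i: "i < N" and psi: "\<psi> \<in> EE" and u: "u \<in> Cl"
  shows "\<psi> \<bullet> (A i *v u) \<noteq> 0"
proof
  assume z: "\<psi> \<bullet> (A i *v u) = 0"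
  let ?p = "A i *v u"
  have npsi: "norm \<psi> = 1" using EE_sphere psi by auto
  have "?p \<in> IC" using A_IC[OF i u] .
  then obtain r where r: "r > 0" "ball ?p r \<subseteq> IC" using IC_open open_contains_ball by blast
  define h where "h = (r/2) *\<^sub>R \<psi>"
  have nh: "norm h = r/2" using r(1) npsi by (simp add: h_def)
  have psih: "\<psi> \<bullet> h = r/2" using npsi by (simp add: h_def dot_square_norm)
  define \<epsilon> where "\<epsilon> = r / (2 * (norm ?p + r))"
  have epos: "\<epsilon> > 0" using r(1) by (simp add: \<epsilon>_def add_nonneg_pos)
  obtain \<phi> where phi: "\<phi> \<in> DD \<inter> sphere 0 1" "dist \<phi> \<psi> < \<epsilon>"
    using psi epos unfolding EE_def closure_approachable by blast
  have close: "\<bar>\<phi> \<bullet> x - \<psi> \<bullet> x\<bar> < r/2" if "norm x \<le> norm ?p + r/2" for x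
  proof -
    have "\<bar>\<phi> \<bullet> x - \<psi> \<bullet> x\<bar> = \<bar>(\<phi> - \<psi>) \<bullet> x\<bar>" by (simp add: inner_diff_left)
    also have "\<dots> \<le> norm (\<phi> - \<psi>) * norm x" by (rule Cauchy_Schwarz_ineq2)
    also have "\<dots> \<le> \<epsilon> * (norm ?p + r/2)"
      using phi(2) that epos by (intro mult_mono) (auto simp: dist_norm less_imp_le)
    also have "\<dots> < \<epsilon> * (norm ?p + r)" using epos r(1) by simp
    also have "\<dots> = r/2" unfolding \<epsilon>_def using r(1)
      by (intro aux1) (simp add: add_nonneg_pos)
    finally show ?thesis .
  qed
  have n1: "norm (?p + h) \<le> norm ?p + r/2" using norm_triangle_ineq[of ?p h] nh by simp
  have n2: "norm (?p - h) \<le> norm ?p + r/2" using norm_triangle_ineq4[of ?p h] nh by simp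
  define P where "P = \<phi> \<bullet> ?p"
  define H where "H = \<phi> \<bullet> h"
  have a1: "\<bar>(P + H) - r/2\<bar> < r/2"
    using close[OF n1] z psih by (simp add: P_def H_def inner_add_right)
  have a2: "\<bar>(P - H) + r/2\<bar> < r/2"
    using close[OF n2] z psih by (simp add: P_def H_def inner_diff_right)
  have Hpos: "H > 0" and PH: "\<bar>P\<bar> < H" using a1 a2 by linarith+
  define q where "q = ?p - (P / H) *\<^sub>R h"
  have "\<phi> \<bullet> q = P - (P / H) * H" by (simp add: q_def P_def H_def inner_diff_right)
  then have phq: "\<phi> \<bullet> q = 0" using Hpos by simp
  have "dist ?p q = \<bar>P / H\<bar> * norm h" by (simp add: q_def dist_norm)
  also have "\<dots> < 1 * norm h"
  proof -
    have "\<bar>P / H\<bar> < 1" using PH Hpos by (simp add: abs_divide)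
    then show ?thesis using nh r(1) by (intro mult_strict_right_mono) auto
  qed
  finally have "q \<in> ball ?p r" using r(1) nh by simp
  then have "q \<in> Cl" using r(2) IC_Cl by blast
  then show False using phi(1) phq by (auto simp: DD_def)
qed

end


lemma finite_uniform_pos:
  assumes "\<forall>i<(N::nat). \<exists>\<eta>>0. P i \<eta>" "\<And>i \<eta> \<eta>'. P i \<eta> \<Longrightarrow> 0 < \<eta>' \<Longrightarrow> \<eta>' \<le> \<eta> \<Longrightarrow> P i \<eta>'"
  shows "\<exists>\<eta>>(0::real). \<forall>i<N. P i \<eta>"
  using assms(1)
proof (induction N)
  case 0 then show ?case by (intro exI[of _ 1]) auto
next
  case (Suc N)
  then obtain \<eta>1 where e1: "\<eta>1 > 0" "\<forall>i<N. P i \<eta>1" by auto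
  obtain \<eta>2 where e2: "\<eta>2 > 0" "P N \<eta>2" using Suc.prems by auto
  show ?case
  proof (intro exI[of _ "min \<eta>1 \<eta>2"] conjI allI impI)
    show "0 < min \<eta>1 \<eta>2" using e1 e2 by simp
    fix i assume "i < Suc N"
    show "P i (min \<eta>1 \<eta>2)"
    proof (cases "i = N")
      case True then show ?thesis using assms(2)[of N \<eta>2 "min \<eta>1 \<eta>2"] e1 e2 by simp
    next
      case False then have "i < N" using \<open>i < Suc N\<close> by simp
      then show ?thesis using assms(2)[of i \<eta>1 "min \<eta>1 \<eta>2"] e1 e2 by simp
    qed
  qed
qed

context domset begin

lemma eta_i: assumes i: "i < N"
  shows "\<exists>\<eta>>0. \<forall>\<psi>\<in>EE. \<forall>u\<in>Cl. \<eta> * norm u \<le> \<bar>\<psi> \<bullet> (A i *v u)\<bar>"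
proof -
  let ?S = "EE \<times> (sphere 0 1 \<inter> Cl)"
  let ?G = "\<lambda>z::(real^'n) \<times> (real^'n). \<bar>fst z \<bullet> (A i *v snd z)\<bar>"
  obtain \<eta> where eta: "\<eta> > 0" "\<And>z. z \<in> ?S \<Longrightarrow> \<eta> \<le> ?G z"
  proof (cases "?S = {}")
    case True then show ?thesis using that[of 1] by auto
  next
    case False
    have cS: "compact ?S" using EE_compact K_compact by (rule compact_Times)
    have "continuous_on ?S ?G"
      by (intro continuous_intros bounded_linear.continuous_on[OF matrix_vector_mul_bounded_linear])
    then obtain z0 where z0: "z0 \<in> ?S" "\<And>y. y \<in> ?S \<Longrightarrow> ?G z0 \<le> ?G y"
      using continuous_attains_inf[OF cS False] by blast
    have "?G z0 > 0" using EE_pos[OF i, of "fst z0" "snd z0"] z0(1) by auto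
    then show ?thesis using that z0(2) by blast
  qed
  show ?thesis
  proof (intro exI[of _ \<eta>] conjI ballI)
    show "\<eta> > 0" by fact
    fix \<psi> u assume psi: "\<psi> \<in> EE" and u: "u \<in> Cl"
    have nu: "norm u > 0" using Cl_nonzero[OF u] by simp
    have "\<eta> \<le> \<bar>\<psi> \<bullet> (A i *v ((1 / norm u) *\<^sub>R u))\<bar>"
      using eta(2)[of "(\<psi>, (1 / norm u) *\<^sub>R u)"] psi unitK[OF u] by auto
    also have "\<dots> = \<bar>\<psi> \<bullet> (A i *v u)\<bar> / norm u"
      using nu by (simp add: matrix_vector_mult_scaleR abs_mult)
    finally show "\<eta> * norm u \<le> \<bar>\<psi> \<bullet> (A i *v u)\<bar>" using nu by (simp add: pos_le_divide_eq)
  qed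
qed

lemma eta: obtains \<eta> where "\<eta> > 0"
  "\<And>i \<psi> u. i < N \<Longrightarrow> \<psi> \<in> EE \<Longrightarrow> u \<in> Cl \<Longrightarrow> \<eta> * norm u \<le> \<bar>\<psi> \<bullet> (A i *v u)\<bar>"
proof -
  have "\<exists>\<eta>>0. \<forall>i<N. \<forall>\<psi>\<in>EE. \<forall>u\<in>Cl. \<eta> * norm u \<le> \<bar>\<psi> \<bullet> (A i *v u)\<bar>"
  proof (rule finite_uniform_pos)
    show "\<forall>i<N. \<exists>\<eta>>0. \<forall>\<psi>\<in>EE. \<forall>u\<in>Cl. \<eta> * norm u \<le> \<bar>\<psi> \<bullet> (A i *v u)\<bar>" using eta_i by blast
    fix i and \<eta> \<eta>' :: real
    assume h: "\<forall>\<psi>\<in>EE. \<forall>u\<in>Cl. \<eta> * norm u \<le> \<bar>\<psi> \<bullet> (A i *v u)\<bar>" "0 < \<eta>'" "\<eta>' \<le> \<eta>"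
    show "\<forall>\<psi>\<in>EE. \<forall>u\<in>Cl. \<eta>' * norm u \<le> \<bar>\<psi> \<bullet> (A i *v u)\<bar>"
    proof (intro ballI)
      fix \<psi> u assume "\<psi> \<in> EE" "u \<in> Cl"
      then have "\<eta> * norm u \<le> \<bar>\<psi> \<bullet> (A i *v u)\<bar>" using h(1) by blast
      moreover have "\<eta>' * norm u \<le> \<eta> * norm u" using h(3) by (intro mult_right_mono) auto
      ultimately show "\<eta>' * norm u \<le> \<bar>\<psi> \<bullet> (A i *v u)\<bar>" by linarith
    qed
  qed
  then show ?thesis using that by blast
qed

end


context domset begin

lemma compar: obtains R where "R > 0"
  "\<And>w u u'. w \<noteq> [] \<Longrightarrow> set w \<subseteq> {..<N} \<Longrightarrow> u \<in> Cl \<Longrightarrow> u' \<in> Cl \<Longrightarrow>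
     norm (mat_word A w *v u') * norm u \<le> R * (norm (mat_word A w *v u) * norm u')"
proof -
  obtain \<delta> where d: "\<delta> > 0" "\<And>u. u \<in> Cl \<Longrightarrow> \<delta> * norm u \<le> \<bar>aa \<bullet> u\<bar>" using delta by blast
  obtain \<eta> where e: "\<eta> > 0"
    "\<And>i \<psi> u. i < N \<Longrightarrow> \<psi> \<in> EE \<Longrightarrow> u \<in> Cl \<Longrightarrow> \<eta> * norm u \<le> \<bar>\<psi> \<bullet> (A i *v u)\<bar>"
    using eta by blast
  define C where "C = cc + 1"
  have C: "C > 0" "cc \<le> C" using cc0 by (auto simp: C_def)
  define R where "R = C * norm aa / (\<delta> * \<eta>)"
  have Rpos: "R > 0" using C d e aa(1) by (simp add: R_def)
  show ?thesis
  proof (rule that[OF Rpos])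
    fix w u u' assume w: "w \<noteq> []" "set w \<subseteq> {..<N}" and u: "u \<in> Cl" and u': "u' \<in> Cl"
    obtain w' i where wi: "w = w' @ [i]" using w(1) by (metis rev_exhaust)
    have i: "i < N" and w': "set w' \<subseteq> {..<N}" using w(2) wi by auto
    define Q where "Q = mat_word A w'"
    have mv: "mat_word A w *v x = Q *v (A i *v x)" for x
      by (simp add: wi Q_def mat_word_snoc matrix_vector_mul_assoc)
    have Qcl: "Q *v x \<in> Cl" if "x \<in> Cl" for x
      unfolding Q_def using mat_word_inv[where N=N and A=A and C=Cl and w=w' and u=x] A_Cl w' that by blast
    have Wcl: "mat_word A w *v x \<in> Cl" if "x \<in> Cl" for x
      using mat_word_inv[where N=N and A=A and C=Cl and w=w and u=x] A_Cl w(2) that by blast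
    define \<phi> where "\<phi> = aa v* Q"
    have dot: "\<phi> \<bullet> x = aa \<bullet> (Q *v x)" for x by (simp add: \<phi>_def dot_lmul_matrix)
    have "\<phi> \<noteq> 0" using dot[of u] aa(2)[OF Qcl[OF u]] by auto
    then have nphi: "norm \<phi> > 0" by simp
    define \<psi> where "\<psi> = (1 / norm \<phi>) *\<^sub>R \<phi>"
    have phipsi: "\<phi> = norm \<phi> *\<^sub>R \<psi>" using nphi by (simp add: \<psi>_def)
    have npsi: "norm \<psi> = 1" using nphi by (simp add: \<psi>_def)
    have "\<psi> \<in> DD" unfolding DD_def mem_Collect_eq
    proof
      fix x assume "x \<in> Cl"
      then have "\<phi> \<bullet> x \<noteq> 0" using dot aa(2) Qcl by simp
      then show "\<psi> \<bullet> x \<noteq> 0" using nphi by (simp add: \<psi>_def)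
    qed
    then have psiE: "\<psi> \<in> EE" unfolding EE_def using npsi closure_subset by fastforce
    have key: "aa \<bullet> (mat_word A w *v x) = norm \<phi> * (\<psi> \<bullet> (A i *v x))" for x
    proof -
      have "aa \<bullet> (mat_word A w *v x) = \<phi> \<bullet> (A i *v x)" by (simp add: mv dot)
      also have "\<dots> = norm \<phi> * (\<psi> \<bullet> (A i *v x))" by (subst phipsi) simp
      finally show ?thesis .
    qed
    define a1 where "a1 = norm (mat_word A w *v u')"
    define b where "b = norm (mat_word A w *v u)"
    have low: "norm \<phi> * (\<eta> * norm u) \<le> norm aa * b"
    proof -
      have "norm \<phi> * (\<eta> * norm u) \<le> norm \<phi> * \<bar>\<psi> \<bullet> (A i *v u)\<bar>"
        using e(2)[OF i psiE u] nphi by (intro mult_left_mono) auto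
      also have "\<dots> = \<bar>aa \<bullet> (mat_word A w *v u)\<bar>" using nphi by (simp add: key abs_mult)
      also have "\<dots> \<le> norm aa * b" unfolding b_def by (rule Cauchy_Schwarz_ineq2)
      finally show ?thesis .
    qed
    have up: "\<delta> * a1 \<le> norm \<phi> * (C * norm u')"
    proof -
      have "\<delta> * a1 \<le> \<bar>aa \<bullet> (mat_word A w *v u')\<bar>" unfolding a1_def by (rule d(2)[OF Wcl[OF u']])
      also have "\<dots> = norm \<phi> * \<bar>\<psi> \<bullet> (A i *v u')\<bar>" using nphi by (simp add: key abs_mult)
      also have "\<dots> \<le> norm \<phi> * (norm \<psi> * norm (A i *v u'))"
        using nphi by (intro mult_left_mono Cauchy_Schwarz_ineq2) auto
      also have "\<dots> \<le> norm \<phi> * (C * norm u')"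
      proof -
        have "norm (A i *v u') \<le> cc * norm u'" by (rule ccb[OF i])
        also have "\<dots> \<le> C * norm u'" using C by (intro mult_right_mono) auto
        finally show ?thesis using npsi nphi by (intro mult_left_mono) auto
      qed
      finally show ?thesis .
    qed
    have "(\<delta> * \<eta>) * (a1 * norm u) = (\<delta> * a1) * (\<eta> * norm u)" by (simp add: mult_ac)
    also have "\<dots> \<le> (norm \<phi> * (C * norm u')) * (\<eta> * norm u)"
      using up e(1) by (intro mult_right_mono) auto
    also have "\<dots> = (C * norm u') * (norm \<phi> * (\<eta> * norm u))" by (simp add: mult_ac)
    also have "\<dots> \<le> (C * norm u') * (norm aa * b)"
      using low C by (intro mult_left_mono) auto
    finally have "(\<delta> * \<eta>) * (a1 * norm u) \<le> (C * norm aa) * (b * norm u')" by (simp add: mult_ac)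
    then have "a1 * norm u \<le> (C * norm aa) * (b * norm u') / (\<delta> * \<eta>)"
      using d(1) e(1) by (simp add: le_divide_eq mult_ac)
    also have "\<dots> = R * (b * norm u')" by (simp add: R_def)
    finally show "norm (mat_word A w *v u') * norm u \<le> R * (norm (mat_word A w *v u) * norm u')"
      by (simp add: a1_def b_def)
  qed
qed

end


context domset begin

lemma onorm_dom: obtains \<Lambda> where "\<Lambda> \<ge> 1"
  "\<And>w u. w \<noteq> [] \<Longrightarrow> set w \<subseteq> {..<N} \<Longrightarrow> u \<in> Op \<Longrightarrow>
     onorm (\<lambda>x. mat_word A w *v x) * norm u \<le> \<Lambda> * norm (mat_word A w *v u)"
proof -
  obtain R where R: "R > 0"
    "\<And>w u u'. w \<noteq> [] \<Longrightarrow> set w \<subseteq> {..<N} \<Longrightarrow> u \<in> Cl \<Longrightarrow> u' \<in> Cl \<Longrightarrow>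
     norm (mat_word A w *v u') * norm u \<le> R * (norm (mat_word A w *v u) * norm u')"
    using compar by blast
  obtain p0 where p0: "p0 \<in> Op" using Op_ne by blast
  obtain r0 where r0: "r0 > 0" "ball p0 r0 \<subseteq> Op" using Op_open p0 open_contains_ball by blast
  define L where "L = (2 / r0) * R * (2 * norm p0 + r0 / 2)"
  have L0: "L \<ge> 0" using R(1) r0(1) by (simp add: L_def)
  show ?thesis
  proof (rule that[of "L + 1"])
    show "L + 1 \<ge> 1" using L0 by simp
    fix w u assume w: "w \<noteq> []" "set w \<subseteq> {..<N}" and uo: "u \<in> Op"
    have u: "u \<in> Cl" using uo Op_Cl by blast
    have nu: "norm u > 0" using Cl_nonzero[OF u] by simp
    define B where "B = mat_word A w"
    define b where "b = norm (B *v u)"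
    have pcl: "p0 \<in> Cl" using p0 Op_Cl by blast
    have main: "norm (B *v x) * norm u \<le> L * b * norm x" for x
    proof (cases "x = 0")
      case True then show ?thesis by simp
    next
      case False
      then have nx: "norm x > 0" by simp
      define q where "q = p0 + (r0 / (2 * norm x)) *\<^sub>R x"
      have nq0: "norm ((r0 / (2 * norm x)) *\<^sub>R x) = r0 / 2" using nx r0(1) by simp
      have "dist p0 q = r0 / 2" unfolding q_def dist_norm using nq0 by simp
      then have "q \<in> ball p0 r0" using r0(1) by simp
      then have qcl: "q \<in> Cl" using r0(2) Op_Cl by blast
      have nq: "norm q \<le> norm p0 + r0 / 2"
        unfolding q_def using norm_triangle_ineq[of p0 "(r0 / (2 * norm x)) *\<^sub>R x"] unfolding nq0 .
      have xeq: "x = (2 * norm x / r0) *\<^sub>R (q - p0)" unfolding q_def using nx r0(1) by simp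
      have "B *v x = (2 * norm x / r0) *\<^sub>R (B *v q - B *v p0)"
        by (subst xeq) (simp add: matrix_vector_mult_scaleR matrix_vector_mult_diff_distrib)
      then have "norm (B *v x) = (2 * norm x / r0) * norm (B *v q - B *v p0)"
        using nx r0(1) by simp
      also have "\<dots> \<le> (2 * norm x / r0) * (norm (B *v q) + norm (B *v p0))"
        using nx r0(1) by (intro mult_left_mono norm_triangle_ineq4) auto
      finally have n0: "norm (B *v x) \<le> (2 * norm x / r0) * (norm (B *v q) + norm (B *v p0))" .
      have "norm (B *v x) * norm u \<le> ((2 * norm x / r0) * (norm (B *v q) + norm (B *v p0))) * norm u"
        using n0 by (rule mult_right_mono) simp
      then have n1: "norm (B *v x) * norm u \<le> (2 * norm x / r0) * (norm (B *v q) * norm u + norm (B *v p0) * norm u)"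
        by (simp add: algebra_simps)
      have c1: "norm (B *v q) * norm u \<le> R * (b * norm q)"
        unfolding B_def b_def by (rule R(2)[OF w u qcl])
      have c2: "norm (B *v p0) * norm u \<le> R * (b * norm p0)"
        unfolding B_def b_def by (rule R(2)[OF w u pcl])
      have "norm (B *v q) * norm u + norm (B *v p0) * norm u \<le> R * b * (norm q + norm p0)"
        using c1 c2 by (simp add: algebra_simps)
      also have "\<dots> \<le> R * b * (2 * norm p0 + r0 / 2)"
        using nq R(1) by (intro mult_left_mono) (auto simp: b_def)
      finally have "norm (B *v x) * norm u \<le> (2 * norm x / r0) * (R * b * (2 * norm p0 + r0 / 2))"
        using n1 nx r0(1) by (smt (verit) mult_left_mono divide_nonneg_pos)
      also have "\<dots> = L * b * norm x" by (simp add: L_def)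
      finally show ?thesis .
    qed
    have "onorm (\<lambda>x. B *v x) \<le> L * b / norm u"
      using main nu by (intro onorm_le) (simp add: pos_le_divide_eq mult_ac)
    then have "onorm (\<lambda>x. B *v x) * norm u \<le> L * b" using nu by (simp add: pos_le_divide_eq)
    also have "\<dots> \<le> (L + 1) * b" by (intro mult_right_mono) (auto simp: b_def)
    finally show "onorm (\<lambda>x. mat_word A w *v x) * norm u \<le> (L + 1) * norm (mat_word A w *v u)"
      by (simp add: B_def b_def)
  qed
qed

lemma Op_nonzero_img: "set w \<subseteq> {..<N} \<Longrightarrow> u \<in> Op \<Longrightarrow> mat_word A w *v u \<noteq> 0"
  using mat_word_inv[where N=N and A=A and C=Cl and w=w and u=u] A_Cl Op_Cl Cl_nonzero by blast

end


lemma aux2: "(L::real) < 0 \<Longrightarrow> D \<le> E \<Longrightarrow> E < 0 \<Longrightarrow> L / D \<le> L / E"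
  by (smt (verit, best) divide_strict_left_mono_neg zero_less_mult_iff)

lemma wprod_pos: "\<forall>i<N. 0 < lam i \<Longrightarrow> set w \<subseteq> {..<N} \<Longrightarrow> 0 < wprod lam w"
  by (induction w) auto

locale mainset = zset N lam \<rho> A t v cc + domset N A M cc
  for N lam \<rho> A t v cc M
begin

lemma point_est:
  assumes om: "\<omega> \<in> seqspace N" and G: "compact \<Gamma>" "\<Gamma> = (\<Union>i<N. ff i ` \<Gamma>)"
    and n: "n \<ge> (1::nat)" and k: "k \<ge> 1"
    and Lam: "\<Lambda> \<ge> 1" "\<And>w u. w \<noteq> [] \<Longrightarrow> set w \<subseteq> {..<N} \<Longrightarrow> u \<in> Op \<Longrightarrow>
     onorm (\<lambda>x. mat_word A w *v x) * norm u \<le> \<Lambda> * norm (mat_word A w *v u)"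
    and y: "y' \<in> \<Gamma>" "y' \<in> cone_at M (Pi_sym ff (shift \<omega> k))"
      "y' \<notin> ball (Pi_sym ff (shift \<omega> k)) (1 / real n)"
  shows "\<exists>s. s \<in> {0..1} \<and> s \<noteq> pi_sym lam \<omega> \<and> \<bar>s - pi_sym lam \<omega>\<bar> \<le> wprod lam (prefix \<omega> k)
    \<and> v (pi_sym lam \<omega>) \<noteq> v s
    \<and> ln (norm (v (pi_sym lam \<omega>) - v s)) / ln \<bar>pi_sym lam \<omega> - s\<bar>
       \<le> ln (onorm (\<lambda>x. mat_word A (prefix \<omega> k) *v x)) / ln (wprod lam (prefix \<omega> k))
         + ln (real n * \<Lambda>) / (- ln (wprod lam (prefix \<omega> k)))"
proof -
  define W where "W = prefix \<omega> k"
  have Wset: "set W \<subseteq> {..<N}" unfolding W_def by (rule set_prefix[OF om])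
  have Wne: "W \<noteq> []" using k by (simp add: W_def prefix_def)
  define x0 where "x0 = pi_sym lam \<omega>"
  define p' where "p' = pi_sym lam (shift \<omega> k)"
  have p'u: "p' \<in> {0..1}" unfolding p'_def by (rule pi_unit[OF shift_seqspace[OF om]])
  define x' where "x' = Pi_sym ff (shift \<omega> k)"
  have x'v: "x' = v p'" unfolding x'_def p'_def using v_Pi[OF shift_seqspace[OF om]] by simp
  have "y' \<in> v ` {0..1}" using Gamma_sub[OF G] y(1) by blast
  then obtain s2 where s2: "s2 \<in> {0..1}" "y' = v s2" by blast
  define s where "s = fun_word (gmap lam) W s2"
  have su: "s \<in> {0..1}" unfolding s_def by (rule gmap_unit[OF pos lamset.s[OF lamset_axioms] Wset s2(1)])
  have x0eq: "x0 = fun_word (gmap lam) W p'" unfolding x0_def p'_def W_def by (rule pi_iter[OF om])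
  have vx0: "v x0 = fun_word ff W x'" unfolding x0eq x'v by (rule vg[OF Wset p'u])
  have vs: "v s = fun_word ff W y'" unfolding s_def s2(2) by (rule vg[OF Wset s2(1)])
  define u where "u = y' - x'"
  have yx: "y' \<noteq> x'" "proj (y' - x') \<in> M" using y(2) by (auto simp: cone_at_def x'_def)
  have uOp: "u \<in> Op" using yx by (simp add: Op_def u_def)
  have nu: "norm u \<ge> 1 / real n" using y(3) by (simp add: u_def x'_def dist_norm norm_minus_commute)
  have diffv: "v x0 - v s = - (mat_word A W *v u)"
  proof -
    have "v x0 - v s = mat_word A W *v (x' - y')" unfolding vx0 vs by (rule fun_word_affine)
    also have "x' - y' = - u" by (simp add: u_def)
    finally show ?thesis by (simp add: matrix_vector_mult_diff_distrib u_def)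
  qed
  have Au0: "mat_word A W *v u \<noteq> 0" by (rule Op_nonzero_img[OF Wset uOp])
  define nv where "nv = norm (v x0 - v s)"
  have nvA: "nv = norm (mat_word A W *v u)" unfolding nv_def diffv by simp
  have nvpos: "nv > 0" using Au0 nvA by simp
  then have vne: "v x0 \<noteq> v s" by (auto simp: nv_def)
  then have sne: "s \<noteq> x0" by auto
  define lw where "lw = wprod lam W"
  have lwpos: "lw > 0" unfolding lw_def by (rule wprod_pos[OF pos Wset])
  have lwr: "lw \<le> \<rho> ^ k"
    using wprod_bound[of N lam \<rho> W] pos rho Wset by (auto simp: lw_def W_def less_imp_le)
  have o0: "\<omega> 0 < N" using om by (simp add: seqspace_def)
  have r0: "0 \<le> \<rho>" using rho[OF o0] pos o0 by force
  have lw1: "lw < 1"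
  proof -
    have "\<rho> ^ k \<le> \<rho>" using power_decreasing[of 1 k \<rho>] k r0 rho1 by simp
    then show ?thesis using lwr rho1 by linarith
  qed
  have xs: "x0 - s = lw * (p' - s2)" unfolding x0eq s_def lw_def by (rule gmap_dist)
  have dxs: "\<bar>x0 - s\<bar> \<le> lw"
  proof -
    have "\<bar>p' - s2\<bar> \<le> 1" using p'u s2(1) by auto
    then have "\<bar>lw\<bar> * \<bar>p' - s2\<bar> \<le> lw * 1" using lwpos by (simp add: mult_left_mono)
    then have "\<bar>x0 - s\<bar> \<le> lw * 1" unfolding xs abs_mult .
    then show ?thesis by simp
  qed
  have dxs0: "\<bar>x0 - s\<bar> > 0" using sne by simp
  define on where "on = onorm (\<lambda>x. mat_word A W *v x)"
  have bl: "bounded_linear (\<lambda>x. mat_word A W *v x)" by (rule matrix_vector_mul_bounded_linear)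
  have onb: "nv \<le> on * norm u" unfolding nvA on_def by (rule onorm[OF bl])
  have onpos: "on > 0"
  proof (rule ccontr)
    assume "\<not> on > 0"
    moreover have "on \<ge> 0" unfolding on_def by (rule onorm_pos_le[OF bl])
    ultimately have "on = 0" by simp
    then show False using onb nvpos by simp
  qed
  have onc: "on \<le> cc ^ k"
  proof -
    have "on \<le> cc ^ length W" unfolding on_def
      by (rule onorm_le) (rule mat_word_norm[OF cc(3) cc(1) Wset])
    then show ?thesis by (simp add: W_def)
  qed
  have on1: "on < 1"
  proof -
    have "cc ^ k \<le> cc" using power_decreasing[of 1 k cc] k cc by simp
    then show ?thesis using onc cc(2) by linarith
  qed
  have n1: "real n \<ge> 1" using n by simp
  have nL: "real n * \<Lambda> \<ge> 1"
  proof -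
    have "1 * 1 \<le> real n * \<Lambda>" using n1 Lam(1) by (intro mult_mono) auto
    then show ?thesis by simp
  qed
  have key: "on * norm u \<le> \<Lambda> * nv" unfolding on_def nvA by (rule Lam(2)[OF Wne Wset uOp])
  have lowb: "on / (real n * \<Lambda>) \<le> nv"
  proof -
    have "on * (1 / real n) \<le> on * norm u" using nu onpos by (intro mult_left_mono) auto
    also have "\<dots> \<le> \<Lambda> * nv" by (rule key)
    finally have h: "on / real n \<le> \<Lambda> * nv" by simp
    have "on / (real n * \<Lambda>) = (on / real n) / \<Lambda>" by simp
    also have "\<dots> \<le> nv"
    proof -
      have Lp: "\<Lambda> > 0" using Lam(1) by simp
      have "on / real n \<le> nv * \<Lambda>" using h by (simp add: mult.commute)
      then show ?thesis using Lp by (simp only: pos_divide_le_eq)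
    qed
    finally show ?thesis .
  qed
  define Llow where "Llow = ln (on / (real n * \<Lambda>))"
  have lowpos: "on / (real n * \<Lambda>) > 0" using onpos nL by simp
  have Lle: "Llow \<le> ln nv" unfolding Llow_def using lowb lowpos by simp
  have Llow_neg: "Llow < 0"
  proof -
    have "on / (real n * \<Lambda>) \<le> on / 1" using onpos nL by (intro divide_left_mono) auto
    then have "on / (real n * \<Lambda>) < 1" using on1 by linarith
    then show ?thesis unfolding Llow_def using lowpos by simp
  qed
  have lnlw: "ln lw < 0" using lwpos lw1 by simp
  have Dle: "ln \<bar>x0 - s\<bar> \<le> ln lw" using dxs dxs0 by simp
  have D0: "ln \<bar>x0 - s\<bar> < 0" using Dle lnlw by linarith
  have "ln nv / ln \<bar>x0 - s\<bar> \<le> Llow / ln \<bar>x0 - s\<bar>" using Lle D0 by (rule divide_right_mono_neg[OF _ less_imp_le])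
  also have "\<dots> \<le> Llow / ln lw" using Llow_neg Dle lnlw by (rule aux2)
  also have "\<dots> = ln on / ln lw + ln (real n * \<Lambda>) / (- ln lw)"
    unfolding Llow_def using onpos nL n Lam(1) by (simp add: ln_div diff_divide_distrib)
  finally have est: "ln nv / ln \<bar>x0 - s\<bar> \<le> ln on / ln lw + ln (real n * \<Lambda>) / (- ln lw)" .
  show ?thesis
    using su sne dxs vne est
    by (intro exI[of _ s]) (simp add: x0_def W_def lw_def on_def nv_def abs_minus_commute)
qed

end


context mainset begin

lemma main_est:
  assumes om: "\<omega> \<in> seqspace N" and G: "compact \<Gamma>" "\<Gamma> = (\<Union>i<N. ff i ` \<Gamma>)"
    and n: "n \<ge> (1::nat)"
    and Lam: "\<Lambda> \<ge> 1" "\<And>w u. w \<noteq> [] \<Longrightarrow> set w \<subseteq> {..<N} \<Longrightarrow> u \<in> Op \<Longrightarrow>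
     onorm (\<lambda>x. mat_word A w *v x) * norm u \<le> \<Lambda> * norm (mat_word A w *v u)"
    and freq: "\<forall>K. \<exists>k\<ge>K. \<exists>y'. y' \<in> \<Gamma> \<and> y' \<in> cone_at M (Pi_sym ff (shift \<omega> k))
                     \<and> y' \<notin> ball (Pi_sym ff (shift \<omega> k)) (1 / real n)"
  shows "holder_exp v (pi_sym lam \<omega>) \<le>
    limsup (\<lambda>n. ereal (ln (onorm (\<lambda>x. mat_word A (prefix \<omega> n) *v x)) / ln (wprod lam (prefix \<omega> n))))"
proof (rule ccontr)
  define x0 where "x0 = pi_sym lam \<omega>"
  define r where "r = (\<lambda>n. ln (onorm (\<lambda>x. mat_word A (prefix \<omega> n) *v x)) / ln (wprod lam (prefix \<omega> n)))"
  define Q where "Q = (\<lambda>y. if v x0 = v y then \<infinity> else ereal (ln (norm (v x0 - v y)) / ln \<bar>x0 - y\<bar>))"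
  have H: "holder_exp v (pi_sym lam \<omega>) = Liminf (at x0 within {0..1}) Q"
    unfolding holder_exp_def Q_def x0_def ..
  assume "\<not> holder_exp v (pi_sym lam \<omega>) \<le> limsup (\<lambda>n. ereal (r n))"
  then have lt: "limsup (\<lambda>n. ereal (r n)) < Liminf (at x0 within {0..1}) Q"
    unfolding H r_def by simp
  obtain c where c: "limsup (\<lambda>n. ereal (r n)) < ereal c" "ereal c < Liminf (at x0 within {0..1}) Q"
    using ereal_dense2[OF lt] by blast
  obtain c1 where c1: "limsup (\<lambda>n. ereal (r n)) < ereal c1" "ereal c1 < ereal c"
    using ereal_dense2[OF c(1)] by blast
  have cc1: "c1 < c" using c1(2) by simp
  have ev1: "eventually (\<lambda>k. ereal (r k) < ereal c1) sequentially"
    using Limsup_lessD[OF c1(1)] .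
  have "eventually (\<lambda>y. ereal c < Q y) (at x0 within {0..1})" using less_LiminfD[OF c(2)] .
  then obtain d where d: "d > 0" "\<And>y. y \<in> {0..1} \<Longrightarrow> y \<noteq> x0 \<Longrightarrow> dist y x0 < d \<Longrightarrow> ereal c < Q y"
    unfolding eventually_at by blast
  define \<epsilon> where "\<epsilon> = c - c1"
  have epos: "\<epsilon> > 0" using cc1 by (simp add: \<epsilon>_def)
  have o0: "\<omega> 0 < N" using om by (simp add: seqspace_def)
  have rpos: "\<rho> > 0" using rho[OF o0] pos o0 by force
  have lnr: "ln \<rho> < 0" using rpos rho1 by simp
  define cst where "cst = ln (real n * \<Lambda>)"
  have n1: "real n \<ge> 1" using n by simp
  have nL: "real n * \<Lambda> \<ge> 1"
  proof -
    have "1 * 1 \<le> real n * \<Lambda>" using n1 Lam(1) by (intro mult_mono) auto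
    then show ?thesis by simp
  qed
  have cst0: "cst \<ge> 0" using nL by (simp add: cst_def)
  have ev2: "eventually (\<lambda>k. \<rho> ^ k < d) sequentially"
  proof -
    have "(\<lambda>k. \<rho> ^ k) \<longlonglongrightarrow> 0" by (rule LIMSEQ_power_zero) (use rpos rho1 in auto)
    then show ?thesis using d(1) by (rule order_tendstoD(2))
  qed
  obtain K3 :: nat where K3: "cst / (\<epsilon> * (- ln \<rho>)) < real K3" using reals_Archimedean2 by blast
  have ev3: "eventually (\<lambda>k. k \<ge> K3 + 1) sequentially" by (rule eventually_ge_at_top)
  obtain K where K: "\<And>k. k \<ge> K \<Longrightarrow> ereal (r k) < ereal c1 \<and> \<rho> ^ k < d \<and> k \<ge> K3 + 1"
    using eventually_conj[OF ev1 eventually_conj[OF ev2 ev3]] unfolding eventually_sequentially by blast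
  obtain k y' where k: "k \<ge> K" and y: "y' \<in> \<Gamma>" "y' \<in> cone_at M (Pi_sym ff (shift \<omega> k))"
      "y' \<notin> ball (Pi_sym ff (shift \<omega> k)) (1 / real n)"
    using freq by blast
  have kK: "ereal (r k) < ereal c1" "\<rho> ^ k < d" "k \<ge> K3 + 1" using K[OF k] by auto
  have k1: "k \<ge> 1" using kK(3) by simp
  define lw where "lw = wprod lam (prefix \<omega> k)"
  obtain s where s: "s \<in> {0..1}" "s \<noteq> x0" "\<bar>s - x0\<bar> \<le> lw" "v x0 \<noteq> v s"
    "ln (norm (v x0 - v s)) / ln \<bar>x0 - s\<bar> \<le> r k + cst / (- ln lw)"
    using point_est[OF om G n k1 Lam y] unfolding x0_def lw_def r_def cst_def by blast
  have lwr: "lw \<le> \<rho> ^ k" "0 < lw"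
    using wprod_bound[of N lam \<rho> "prefix \<omega> k"] wprod_pos[OF pos set_prefix[OF om]] pos rho set_prefix[OF om]
    by (auto simp: lw_def less_imp_le)
  have "dist s x0 < d" using s(3) lwr kK(2) by (simp add: dist_real_def)
  then have "ereal c < Q s" using d(2) s(1,2) by blast
  then have cq: "c < ln (norm (v x0 - v s)) / ln \<bar>x0 - s\<bar>" using s(4) by (simp add: Q_def)
  have "ln lw \<le> ln (\<rho> ^ k)" using lwr rpos by simp
  then have lnlw: "ln lw \<le> real k * ln \<rho>" by (simp add: ln_realpow)
  have kpos: "real k * (- ln \<rho>) > 0" using k1 lnr by (intro mult_pos_pos) auto
  have ek: "cst / (- ln lw) \<le> cst / (real k * (- ln \<rho>))"
  proof -
    have a: "- ln lw \<ge> real k * (- ln \<rho>)" using lnlw by simp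
    have a0: "- ln lw > 0" using a kpos by linarith
    have "0 < (- ln lw) * (real k * (- ln \<rho>))" using a0 kpos by (rule mult_pos_pos)
    then show ?thesis by (rule divide_left_mono[OF a cst0])
  qed
  also have "\<dots> < \<epsilon>"
  proof -
    have ap: "\<epsilon> * (- ln \<rho>) > 0" using epos lnr by (intro mult_pos_pos) auto
    have "cst < real K3 * (\<epsilon> * (- ln \<rho>))" using K3 ap by (simp only: pos_divide_less_eq)
    then have "cst < \<epsilon> * (- ln \<rho>) * real K3" by (metis mult.commute)
    also have "\<dots> \<le> \<epsilon> * (- ln \<rho>) * real k" using kK(3) ap by (intro mult_left_mono) auto
    finally have "cst < \<epsilon> * (real k * (- ln \<rho>))" by (simp add: mult_ac)
    then have "cst < \<epsilon> * (real k * (- ln \<rho>))" .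
    then show ?thesis using kpos by (simp only: pos_divide_less_eq)
  qed
  finally have "cst / (- ln lw) < \<epsilon>" .
  moreover have "r k < c1" using kK(1) by simp
  ultimately have "r k + cst / (- ln lw) < c" by (simp add: \<epsilon>_def)
  then show False using cq s(5) by linarith
qed

end


theorem lemma3p3:
  fixes N :: nat and A :: "nat \<Rightarrow> real^'n^'n" and t z :: "nat \<Rightarrow> real^'n"
    and lam :: "nat \<Rightarrow> real" and \<Gamma> :: "(real^'n) set" and v :: "real \<Rightarrow> real^'n"
    and M :: "(real^'n^'n) set" and \<omega> :: "nat \<Rightarrow> nat"
  defines "f \<equiv> \<lambda>i x. A i *v x + t i"
  assumes inv: "\<forall>i<N. invertible (A i)"
    and contr: "\<forall>i<N. \<exists>c<1. \<forall>x y. dist (f i x) (f i y) \<le> c * dist x y"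
    and zip: "\<forall>i<N. f i (z 0) = z i \<and> f i (z N) = z (Suc i)"
    and attr: "compact \<Gamma>" "\<Gamma> \<noteq> {}" "\<Gamma> = (\<Union>i<N. f i ` \<Gamma>)"
    and lam: "\<forall>i<N. lam i > 0" "(\<Sum>i<N. lam i) = 1"
    and vcont: "continuous_on {0..1} v"
    and veq: "\<forall>i<N. \<forall>x\<in>(\<lambda>y. lam i * y + gam lam i) ` {0..1}.
                v x = f i (v ((x - gam lam i) / lam i))"
    and dom: "dominated_index1 N A M"
    and nondeg: "non_degenerate N A f z \<Gamma> M"
    and \<omega>: "\<omega> \<in> seqspace N" "\<omega> \<notin> bad_set N f \<Gamma> M"
  shows "holder_exp v (pi_sym lam \<omega>) \<le>
    limsup (\<lambda>n. ereal (ln (onorm (\<lambda>x. mat_word A (prefix \<omega> n) *v x)) / ln (wprod lam (prefix \<omega> n))))"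
proof -
  have N0: "N \<noteq> 0" using lam(2) by (metis lessThan_0 sum.empty zero_neq_one)
  have zN: "z N - z 0 \<noteq> 0" using nondeg unfolding non_degenerate_def by blast
  from contr have "\<forall>i. \<exists>c. i < N \<longrightarrow> c < 1 \<and> (\<forall>x y. dist (f i x) (f i y) \<le> c * dist x y)" by blast
  then obtain cf where cf: "\<And>i. i < N \<Longrightarrow> cf i < 1 \<and> (\<forall>x y. dist (f i x) (f i y) \<le> cf i * dist x y)"
    by metis
  have N1: "N \<noteq> 1"
  proof
    assume N1: "N = 1"
    have "dist (z 0) (z 1) = dist (f 0 (z 0)) (f 0 (z 1))" using zip N1 by simp
    also have "\<dots> \<le> cf 0 * dist (z 0) (z 1)" using cf[of 0] N1 by simp
    finally have "(1 - cf 0) * dist (z 0) (z 1) \<le> 0" by (simp add: left_diff_distrib)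
    moreover have "1 - cf 0 > 0" using cf[of 0] N1 by simp
    ultimately have "dist (z 0) (z 1) \<le> 0" by (simp add: mult_le_0_iff)
    then have "z 1 = z 0" by simp
    then show False using zN N1 by simp
  qed
  have lam1: "lam i < 1" if i: "i < N" for i
  proof -
    define j :: nat where "j = (if i = 0 then 1 else 0)"
    have j: "j < N" "j \<noteq> i" using N0 N1 i by (auto simp: j_def)
    have "sum lam {i, j} \<le> sum lam {..<N}"
      using i j lam(1) by (intro sum_mono2) (auto intro: less_imp_le)
    then have "lam i + lam j \<le> 1" using j lam(2) by simp
    then show ?thesis using lam(1) j by force
  qed
  define \<rho> where "\<rho> = Max (lam ` {..<N})"
  have rho: "\<And>i. i < N \<Longrightarrow> lam i \<le> \<rho>" unfolding \<rho>_def by (intro Max_ge) auto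
  have rho1: "\<rho> < 1"
  proof -
    have "\<rho> \<in> lam ` {..<N}" unfolding \<rho>_def using N0 by (intro Max_in) auto
    then show ?thesis using lam1 by auto
  qed
  define cc where "cc = Max (insert 0 (cf ` {..<N}))"
  have cc0: "0 \<le> cc" unfolding cc_def by (intro Max_ge) auto
  have cc1: "cc < 1"
  proof -
    have "cc \<in> insert 0 (cf ` {..<N})" unfolding cc_def by (intro Max_in) auto
    then show ?thesis using cf by auto
  qed
  have ccb: "norm (A i *v u) \<le> cc * norm u" if i: "i < N" for i u
  proof -
    have "norm (A i *v u) = dist (f i u) (f i 0)" by (simp add: f_def dist_norm)
    also have "\<dots> \<le> cf i * dist u 0" using cf[OF i] by blast
    also have "\<dots> \<le> cc * dist u 0"
      unfolding cc_def using i by (intro mult_right_mono Max_ge) auto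
    finally show ?thesis by simp
  qed
  have ms: "mainset N lam \<rho> A t v cc M"
    unfolding mainset_def zset_def lamset_def zset_axioms_def domset_def
    using lam rho rho1 cc0 cc1 ccb vcont veq dom inv by (simp add: f_def)
  interpret ms: mainset N lam \<rho> A t v cc M by (rule ms)
  obtain \<Lambda> where Lam: "\<Lambda> \<ge> 1" "\<And>w u. w \<noteq> [] \<Longrightarrow> set w \<subseteq> {..<N} \<Longrightarrow> u \<in> ms.Op \<Longrightarrow>
     onorm (\<lambda>x. mat_word A w *v x) * norm u \<le> \<Lambda> * norm (mat_word A w *v u)"
    using ms.onorm_dom by blast
  from \<omega>(2) obtain n l m where nlm: "n \<ge> 1" "\<not> (\<exists>K. \<forall>k\<ge>K. shift \<omega> k \<in> bad_nlm N f \<Gamma> M n l m)"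
    unfolding bad_set_def by blast
  have freq: "\<forall>K. \<exists>k\<ge>K. \<exists>y'. y' \<in> \<Gamma> \<and> y' \<in> cone_at M (Pi_sym f (shift \<omega> k))
                     \<and> y' \<notin> ball (Pi_sym f (shift \<omega> k)) (1 / real n)"
  proof
    fix K
    obtain k where k: "k \<ge> K" "shift \<omega> k \<notin> bad_nlm N f \<Gamma> M n l m" using nlm(2) by blast
    then show "\<exists>k\<ge>K. \<exists>y'. y' \<in> \<Gamma> \<and> y' \<in> cone_at M (Pi_sym f (shift \<omega> k))
                     \<and> y' \<notin> ball (Pi_sym f (shift \<omega> k)) (1 / real n)"
      using shift_seqspace[OF \<omega>(1), of k] unfolding bad_nlm_def by blast
  qed
  show ?thesis
    using ms.main_est[OF \<omega>(1) attr(1) attr(3)[unfolded f_def] nlm(1) Lam freq[unfolded f_def]] .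
qed


end
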